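(* Let $\Lambda\subseteq\Lambda_f\subset\mathbb{R}^n$ be nested lattices with Voronoi regions $\mathcal{V}$ and $\mathcal{V}_f$ respectively, and suppose the tiling condition $\mathcal{V}=(\Lambda_f\cap\mathcal{V})+\mathcal{V}_f$ holds (Minkowski sum). Then for every $\mathbf{x}\in\mathbb{R}^n$, $$[Q_{\Lambda_f}(\mathbf{x})]\bmod\Lambda=Q_{\Lambda_f}\big([\mathbf{x}]\bmod\Lambda\big).$$
   Context: For a lattice $L\subset\mathbb{R}^n$ with Voronoi region $\mathcal{V}_L$ (the set of points whose nearest lattice point is $\mathbf{0}$, ties broken systematically so that $\mathcal{V}_L$ is a fundamental domain), $Q_L(\mathbf{y})$ is the unique $\mathbf{t}\in L$ with $\mathbf{y}-\mathbf{t}\in\mathcal{V}_L$, and $[\mathbf{y}]\bmod L=\mathbf{y}-Q_L(\mathbf{y})$. *)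

theory Defs
  imports "HOL-Analysis.Analysis"
begin

definition is_lattice :: "(real ^ 'n) set \<Rightarrow> bool" where
  "is_lattice L \<longleftrightarrow> (\<exists>B :: real ^ 'n ^ 'n. invertible B \<and>
      L = {B *v z | z. \<forall>i. z $ i \<in> \<int>})"

text \<open>V is a Voronoi region of L: it consists of points whose nearest lattice point is 0
  (V is contained in the closed Voronoi cell), with ties broken so that V is a fundamental
  domain (every y has a unique t in L with y - t in V).\<close>
definition voronoi_region :: "(real ^ 'n) set \<Rightarrow> (real ^ 'n) set \<Rightarrow> bool" where
  "voronoi_region L V \<longleftrightarrow>
     V \<subseteq> {y. \<forall>t\<in>L. norm y \<le> norm (y - t)} \<and>
     (\<forall>y. \<exists>!t. t \<in> L \<and> y - t \<in> V)"

definition quant :: "(real ^ 'n) set \<Rightarrow> (real ^ 'n) set \<Rightarrow> real ^ 'n \<Rightarrow> real ^ 'n" where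
  "quant L V y = (THE t. t \<in> L \<and> y - t \<in> V)"

definition lmod :: "(real ^ 'n) set \<Rightarrow> (real ^ 'n) set \<Rightarrow> real ^ 'n \<Rightarrow> real ^ 'n" where
  "lmod L V y = y - quant L V y"

end

theory Submission
  imports Defs
begin

lemma quant_eq:
  assumes "voronoi_region L V" "t \<in> L" "y - t \<in> V"
  shows "quant L V y = t"
proof -
  from assms(1) have "\<exists>!t. t \<in> L \<and> y - t \<in> V" by (simp add: voronoi_region_def)
  then show ?thesis unfolding quant_def using assms(2,3) by (simp add: the1_equality)
qed

lemma quant_mem:
  assumes "voronoi_region L V"
  shows "quant L V y \<in> L \<and> y - quant L V y \<in> V"
proof -
  from assms have "\<exists>!t. t \<in> L \<and> y - t \<in> V" by (simp add: voronoi_region_def)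
  then show ?thesis unfolding quant_def by (rule theI')
qed

lemma lattice_diff:
  fixes L :: "(real ^ 'n) set"
  assumes "is_lattice L" "a \<in> L" "b \<in> L"
  shows "a - b \<in> L"
proof -
  obtain B :: "real^'n^'n" where L: "L = {B *v z | z. \<forall>i. z $ i \<in> \<int>}"
    using assms(1) unfolding is_lattice_def by blast
  obtain z1 where z1: "a = B *v z1" "\<forall>i. z1 $ i \<in> \<int>" using assms(2) L by blast
  obtain z2 where z2: "b = B *v z2" "\<forall>i. z2 $ i \<in> \<int>" using assms(3) L by blast
  have "a - b = B *v (z1 - z2)" using z1 z2 by (simp add: matrix_vector_mult_diff_distrib)
  moreover have "\<forall>i. (z1 - z2) $ i \<in> \<int>" using z1 z2 by (simp add: Ints_diff)
  ultimately show ?thesis using L by blast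
qed

theorem lemma6:
  fixes Lam Lamf V Vf :: "(real ^ 'n) set"
  assumes "is_lattice Lam" and "is_lattice Lamf" and "Lam \<subseteq> Lamf"
    and "voronoi_region Lam V" and "voronoi_region Lamf Vf"
    and "V = {a + b | a b. a \<in> Lamf \<inter> V \<and> b \<in> Vf}"
  shows "\<forall>x. lmod Lam V (quant Lamf Vf x) = quant Lamf Vf (lmod Lam V x)"
proof
  fix x
  define t where "t = quant Lamf Vf x"
  define s where "s = quant Lam V t"
  have t: "t \<in> Lamf" "x - t \<in> Vf" using quant_mem[OF assms(5)] t_def by auto
  have s: "s \<in> Lam" "t - s \<in> V" using quant_mem[OF assms(4)] s_def by auto
  have tsf: "t - s \<in> Lamf"
    using lattice_diff[OF assms(2) t(1)] s(1) assms(3) by blast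
  have "x - s = (t - s) + (x - t)" by simp
  hence "x - s \<in> V" using tsf s(2) t(2) assms(6) by blast
  hence qx: "quant Lam V x = s" using quant_eq[OF assms(4) s(1)] by simp
  have "lmod Lam V x - (t - s) = x - t" by (simp add: lmod_def qx)
  hence "quant Lamf Vf (lmod Lam V x) = t - s" using quant_eq[OF assms(5) tsf, of "lmod Lam V x"] t(2) by metis
  thus "lmod Lam V (quant Lamf Vf x) = quant Lamf Vf (lmod Lam V x)"
    by (simp add: lmod_def t_def[symmetric] s_def[symmetric])
qed

end
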